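(* Let $n\ge2$ and let $X_1,\dots,X_n$ be i.i.d. real random variables. For $N\in\mathbb{N}$ let $g_0,\dots,g_N:\mathbb{R}\to\mathbb{R}$ be functions such that each $g_\ell(X_j)$ is almost surely bounded. Let $\mu_\ell=\mathbb{E}(g_\ell(X_1))$, $\theta=\sum_{\ell=0}^N\mu_\ell^2$, and $$U_n=\frac{2}{n(n-1)}\sum_{\ell=0}^N\sum_{1\le j<j'\le n}g_\ell(X_j)g_\ell(X_{j'}).$$ For $j=1,\dots,n$ define $$W_j=2\sum_{\ell=0}^N\Big(\mu_\ell\big(g_\ell(X_j)-\mu_\ell\big)-\frac{(g_\ell(X_j)-\mu_\ell)^2}{n-1}\Big).$$ Let $a_W,b_W$ be real numbers with $a_W\le W_j\le b_W$ almost surely, and $\delta_W=|\mathbb{E}(W_j)|$. Then for all $t>0$, $$\mathbb{P}\big(U_n-\theta<-(t+\delta_W)\big)\le\exp\Big(-\frac{2nt^2}{(b_W-a_W)^2}\Big).$$ *)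

theory Defs
  imports "HOL-Probability.Probability"
begin

definition U_stat :: "nat \<Rightarrow> nat \<Rightarrow> (nat \<Rightarrow> real \<Rightarrow> real) \<Rightarrow> (nat \<Rightarrow> 'a \<Rightarrow> real) \<Rightarrow> 'a \<Rightarrow> real" where
  "U_stat n N g X \<omega> = 2 / (real n * (real n - 1)) *
     (\<Sum>l\<in>{0..N}. \<Sum>j\<in>{1..n}. \<Sum>j'\<in>{j+1..n}. g l (X j \<omega>) * g l (X j' \<omega>))"

definition W_var :: "nat \<Rightarrow> nat \<Rightarrow> (nat \<Rightarrow> real \<Rightarrow> real) \<Rightarrow> (nat \<Rightarrow> real) \<Rightarrow> (nat \<Rightarrow> 'a \<Rightarrow> real) \<Rightarrow> nat \<Rightarrow> 'a \<Rightarrow> real" where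
  "W_var n N g \<mu> X j \<omega> = 2 * (\<Sum>l\<in>{0..N}.
     \<mu> l * (g l (X j \<omega>) - \<mu> l) - (g l (X j \<omega>) - \<mu> l)^2 / (real n - 1))"

end

theory Submission
  imports Defs
begin

lemma pair_sum: fixes f :: "nat \<Rightarrow> real"
  shows "2 * (\<Sum>j\<in>{1..n}. \<Sum>j'\<in>{j+1..n}. f j * f j') = (\<Sum>j\<in>{1..n}. f j)^2 - (\<Sum>j\<in>{1..n}. (f j)^2)"
proof (induction n)
  case 0 then show ?case by simp
next
  case (Suc n)
  have a: "(\<Sum>j\<in>{1..Suc n}. \<Sum>j'\<in>{j+1..Suc n}. f j * f j') =
        (\<Sum>j\<in>{1..n}. \<Sum>j'\<in>{j+1..Suc n}. f j * f j')"
    by (simp add: sum.atLeast_Suc_atMost_Suc_shift)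
  also have "\<dots> = (\<Sum>j\<in>{1..n}. (\<Sum>j'\<in>{j+1..n}. f j * f j') + f j * f (Suc n))"
    by (intro sum.cong refl) auto
  also have "\<dots> = (\<Sum>j\<in>{1..n}. \<Sum>j'\<in>{j+1..n}. f j * f j') + (\<Sum>j\<in>{1..n}. f j) * f (Suc n)"
    by (simp add: sum.distrib sum_distrib_right)
  finally show ?case using Suc by (simp add: power2_eq_square algebra_simps)
qed

lemma key_ineq: fixes f :: "nat \<Rightarrow> real" and m :: real
  assumes "n \<ge> 2"
  shows "(1 / real n) * (\<Sum>j\<in>{1..n}. 2 * (m * (f j - m) - (f j - m)^2 / (real n - 1)))
     \<le> 2 / (real n * (real n - 1)) * (\<Sum>j\<in>{1..n}. \<Sum>j'\<in>{j+1..n}. f j * f j') - m^2"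
proof -
  define S where "S = (\<Sum>j\<in>{1..n}. f j)"
  define Q where "Q = (\<Sum>j\<in>{1..n}. (f j)^2)"
  have P: "(\<Sum>j\<in>{1..n}. \<Sum>j'\<in>{j+1..n}. f j * f j') = (S^2 - Q)/2"
    using pair_sum[of f n] unfolding S_def Q_def by simp
  have L: "(\<Sum>j\<in>{1..n}. 2 * (m * (f j - m) - (f j - m)^2 / (real n - 1)))
     = 2 * m * (S - n*m) - 2 * (Q - 2*m*S + n*m^2) / (real n - 1)"
    unfolding S_def Q_def
    by (simp add: sum.distrib sum_subtractf sum_distrib_left sum_divide_distrib[symmetric]
        power2_eq_square algebra_simps)
  have n1: "real n - 1 > 0" "real n > 0" using assms by auto
  have nn: "0 \<le> ((S - n*m)^2 + (Q - 2*m*S + n*m^2)) / (real n * (real n - 1))"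
  proof -
    have "Q - 2*m*S + n*m^2 = (\<Sum>j\<in>{1..n}. (f j - m)^2)"
      unfolding S_def Q_def
      by (simp add: sum.distrib sum_subtractf sum_distrib_left power2_eq_square algebra_simps)
    also have "\<dots> \<ge> 0" by (intro sum_nonneg) auto
    finally show ?thesis using n1 by (intro divide_nonneg_pos) auto
  qed
  have "2 / (real n * (real n - 1)) * ((S^2 - Q)/2) - m^2
     - (1 / real n) * (2 * m * (S - n*m) - 2 * (Q - 2*m*S + n*m^2) / (real n - 1))
     = ((S - n*m)^2 + (Q - 2*m*S + n*m^2)) / (real n * (real n - 1))"
    using n1 apply (simp add: divide_simps)
    apply (simp add: power2_eq_square algebra_simps)
    done
  then show ?thesis using nn unfolding P L by linarith
qed

theorem lemma1:
  fixes M :: "'a measure" and X :: "nat \<Rightarrow> 'a \<Rightarrow> real" and g :: "nat \<Rightarrow> real \<Rightarrow> real"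
    and n N :: nat and aW bW t :: real
  assumes "prob_space M"
    and n2: "n \<ge> 2"
    and rv: "\<And>j. j \<in> {1..n} \<Longrightarrow> X j \<in> borel_measurable M"
    and indep: "prob_space.indep_vars M (\<lambda>_. borel) X {1..n}"
    and ident: "\<And>j. j \<in> {1..n} \<Longrightarrow> distr M borel (X j) = distr M borel (X 1)"
    and gmeas: "\<And>l. l \<in> {0..N} \<Longrightarrow> g l \<in> borel_measurable borel"
    and gbdd: "\<And>l j. l \<in> {0..N} \<Longrightarrow> j \<in> {1..n} \<Longrightarrow>
                 \<exists>B. AE \<omega> in M. \<bar>g l (X j \<omega>)\<bar> \<le> B"
    and Wbdd: "\<And>j. j \<in> {1..n} \<Longrightarrow>
       AE \<omega> in M. aW \<le> W_var n N g (\<lambda>l. prob_space.expectation M (\<lambda>\<omega>. g l (X 1 \<omega>))) X j \<omega>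
                 \<and> W_var n N g (\<lambda>l. prob_space.expectation M (\<lambda>\<omega>. g l (X 1 \<omega>))) X j \<omega> \<le> bW"
    and t: "t > 0"
  shows
   "let \<mu> = (\<lambda>l. prob_space.expectation M (\<lambda>\<omega>. g l (X 1 \<omega>)));
        \<theta> = (\<Sum>l\<in>{0..N}. (\<mu> l)^2);
        \<delta>W = \<bar>prob_space.expectation M (W_var n N g \<mu> X 1)\<bar>
    in measure M {\<omega> \<in> space M. U_stat n N g X \<omega> - \<theta> < - (t + \<delta>W)}
         \<le> exp (- (2 * real n * t^2) / (bW - aW)^2)"
proof -
  interpret prob_space M by fact
  define \<mu> where "\<mu> = (\<lambda>l. expectation (\<lambda>\<omega>. g l (X 1 \<omega>)))"
  define \<theta> where "\<theta> = (\<Sum>l\<in>{0..N}. (\<mu> l)^2)"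
  define h where "h = (\<lambda>x. 2 * (\<Sum>l\<in>{0..N}. \<mu> l * (g l x - \<mu> l) - (g l x - \<mu> l)^2 / (real n - 1)))"
  define W where "W = W_var n N g \<mu> X"
  define \<delta> where "\<delta> = \<bar>expectation (W 1)\<bar>"
  have Wh: "W j \<omega> = h (X j \<omega>)" for j \<omega> unfolding W_def W_var_def h_def by simp
  have Wh': "W j = (\<lambda>\<omega>. h (X j \<omega>))" for j using Wh by (intro ext) simp
  have hm: "h \<in> borel_measurable borel"
    unfolding h_def using gmeas by measurable
  show ?thesis
    unfolding Let_def \<mu>_def[symmetric] \<theta>_def[symmetric] W_def[symmetric] \<delta>_def[symmetric]
  proof -
    have Wm: "W j \<in> borel_measurable M" if "j \<in> {1..n}" for j
      unfolding Wh' using measurable_comp[OF rv[OF that] hm] by (simp add: comp_def)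
    have WAE: "AE \<omega> in M. W j \<omega> \<in> {aW..bW}" if "j \<in> {1..n}" for j
      using Wbdd[OF that] unfolding W_def \<mu>_def by auto
    have "1 \<in> {1..n}" using n2 by auto
    have "AE \<omega> in M. aW \<le> bW" using WAE[OF \<open>1 \<in> {1..n}\<close>] by eventually_elim auto
    then have ab: "aW \<le> bW" by simp
    have EW: "expectation (W j) = expectation (W 1)" if "j \<in> {1..n}" for j
    proof -
      have "expectation (W j) = integral\<^sup>L (distr M borel (X j)) h"
        unfolding Wh' by (rule integral_distr[symmetric, OF rv[OF that] hm])
      also have "\<dots> = integral\<^sup>L (distr M borel (X 1)) h" using ident[OF that] by simp
      also have "\<dots> = expectation (W 1)"
        unfolding Wh' by (rule integral_distr[OF rv[OF \<open>1 \<in> {1..n}\<close>] hm])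
      finally show ?thesis .
    qed
    define Es where "Es = (\<Sum>j\<in>{1..n}. expectation (W j))"
    have Es: "Es = real n * expectation (W 1)" 
    proof -
      have "Es = (\<Sum>j\<in>{1..n}. expectation (W 1))" unfolding Es_def by (rule sum.cong[OF refl EW])
      then show ?thesis by simp
    qed
    have pw: "(1 / real n) * (\<Sum>j\<in>{1..n}. W j \<omega>) \<le> U_stat n N g X \<omega> - \<theta>" for \<omega>
    proof -
      have "(1 / real n) * (\<Sum>j\<in>{1..n}. W j \<omega>) = (\<Sum>l\<in>{0..N}. (1 / real n) *
          (\<Sum>j\<in>{1..n}. 2 * (\<mu> l * (g l (X j \<omega>) - \<mu> l) - (g l (X j \<omega>) - \<mu> l)^2 / (real n - 1))))"
      proof -
        have "(\<Sum>j\<in>{1..n}. W j \<omega>) = (\<Sum>j\<in>{1..n}. \<Sum>l\<in>{0..N}.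
            2 * (\<mu> l * (g l (X j \<omega>) - \<mu> l) - (g l (X j \<omega>) - \<mu> l)^2 / (real n - 1)))"
          unfolding W_def W_var_def by (simp add: sum_distrib_left)
        also have "\<dots> = (\<Sum>l\<in>{0..N}. \<Sum>j\<in>{1..n}.
            2 * (\<mu> l * (g l (X j \<omega>) - \<mu> l) - (g l (X j \<omega>) - \<mu> l)^2 / (real n - 1)))"
          by (rule sum.swap)
        finally show ?thesis by (simp only: sum_distrib_left)
      qed
      also have "\<dots> \<le> (\<Sum>l\<in>{0..N}. 2 / (real n * (real n - 1)) *
           (\<Sum>j\<in>{1..n}. \<Sum>j'\<in>{j+1..n}. g l (X j \<omega>) * g l (X j' \<omega>)) - (\<mu> l)^2)"
        by (intro sum_mono key_ineq n2)
      also have "\<dots> = U_stat n N g X \<omega> - \<theta>"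
        unfolding U_stat_def \<theta>_def by (simp add: sum_subtractf sum_distrib_left)
      finally show ?thesis .
    qed
    have sub: "{\<omega> \<in> space M. U_stat n N g X \<omega> - \<theta> < - (t + \<delta>)} \<subseteq>
        {\<omega> \<in> space M. (\<Sum>j\<in>{1..n}. W j \<omega>) \<le> Es - real n * t}"
    proof safe
      fix \<omega> assume "\<omega> \<in> space M" "U_stat n N g X \<omega> - \<theta> < - (t + \<delta>)"
      with pw[of \<omega>] have "(1 / real n) * (\<Sum>j\<in>{1..n}. W j \<omega>) < - (t + \<delta>)" by linarith
      then have "(\<Sum>j\<in>{1..n}. W j \<omega>) < real n * (- (t + \<delta>))"
        using n2 by (simp add: field_simps)
      moreover have "- \<delta> \<le> expectation (W 1)" unfolding \<delta>_def by linarith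
      then have "real n * (- \<delta>) \<le> Es" unfolding Es by (intro mult_left_mono) auto
      ultimately show "(\<Sum>j\<in>{1..n}. W j \<omega>) \<le> Es - real n * t"
        by (simp add: algebra_simps)
    qed
    show "measure M {\<omega> \<in> space M. U_stat n N g X \<omega> - \<theta> < - (t + \<delta>)}
         \<le> exp (- (2 * real n * t^2) / (bW - aW)^2)"
    proof (cases "aW = bW")
      case True
      then show ?thesis by simp
    next
      case False
      with ab have ab': "aW < bW" by simp
      have indW: "indep_vars (\<lambda>_. borel) W {1..n}"
      proof -
        have "indep_vars (\<lambda>_. borel) (\<lambda>j \<omega>. h (X j \<omega>)) {1..n}"
          by (rule indep_vars_compose2[OF indep]) (use hm in auto)
        moreover have "(\<lambda>j \<omega>. h (X j \<omega>)) = W" using Wh by (intro ext) simp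
        ultimately show ?thesis by simp
      qed
      interpret H: Hoeffding_ineq M "{1..n}" W "\<lambda>_. aW" "\<lambda>_. bW" Es
        by unfold_locales (use indW WAE Es_def in auto)
      have pos: "(\<Sum>i\<in>{1..n}. (bW - aW)\<^sup>2) > 0" using ab' n2 by simp
      have "measure M {\<omega> \<in> space M. U_stat n N g X \<omega> - \<theta> < - (t + \<delta>)}
          \<le> measure M {\<omega> \<in> space M. (\<Sum>j\<in>{1..n}. W j \<omega>) \<le> Es - real n * t}"
        by (rule finite_measure_mono[OF sub]) (use Wm in measurable)
      also have "\<dots> \<le> exp (-2 * (real n * t)\<^sup>2 / (\<Sum>i\<in>{1..n}. (bW - aW)\<^sup>2))"
        by (rule H.Hoeffding_ineq_le) (use t pos in auto)
      also have "-2 * (real n * t)\<^sup>2 / (\<Sum>i\<in>{1..n}. (bW - aW)\<^sup>2) = - (2 * real n * t^2) / (bW - aW)^2"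
      proof -
        have n0: "real n \<noteq> 0" using n2 by simp
        have "-2 * (real n * t)\<^sup>2 / (\<Sum>i\<in>{1..n}. (bW - aW)\<^sup>2)
            = (real n * (- (2 * real n * t^2))) / (real n * (bW - aW)^2)"
          by (simp add: power2_eq_square algebra_simps)
        also have "\<dots> = - (2 * real n * t^2) / (bW - aW)^2"
          using n0 by (rule mult_divide_mult_cancel_left)
        finally show ?thesis .
      qed
      finally show ?thesis .
    qed
  qed
qed

end
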